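(* For any finite metric spaces $(X,d_X)$ and $(Y,d_Y)$, \[d_{\mathrm{B}}\left(\mathrm{dgm}_0(\mathcal{R}_\bullet(X,d_X)),\mathrm{dgm}_0(\mathcal{R}_\bullet(Y,d_Y))\right)\le d_{\mathrm{I}}\left(\beta_0^{(X,d_X)},\beta_0^{(Y,d_Y)}\right).\]
   Context: For a finite metric space $(X,d_X)$ and $\delta\in\mathbf{R}$, the Rips complex $\mathcal{R}_\delta(X,d_X)$ is the simplicial complex on $X$ whose simplices are the nonempty $\sigma\subseteq X$ with $d_X(x,x')\le\delta$ for all $x,x'\in\sigma$; $\mathcal{R}_\bullet(X,d_X)$ is the filtration $\delta\mapsto\mathcal{R}_\delta(X,d_X)$ with inclusions. $\mathrm{dgm}_0(\mathcal{R}_\bullet(X,d_X))$ is the persistence diagram (multiset of birth–death pairs $(b,d)$ with $b\le d$, $d$ possibly $+\infty$) of the persistence module $\delta\mapsto\mathrm{H}_0(\mathcal{R}_\delta(X,d_X))$ over a fixed field. The bottleneck distance between multisets $X_1,X_2$ of points of $\{(u_1,u_2)\in(\mathbf{R}\cup\{\pm\infty\})^2:u_1\le u_2\}$: a partial injection $\alpha:X_1\nrightarrow X_2$ is an $\varepsilon$-matching if $\|\mathbf{u}-\alpha(\mathbf{u})\|_\infty\le\varepsilon$ for matched $\mathbf{u}$ and $u_2-u_1\le2\varepsilon$ for every unmatched $\mathbf{u}=(u_1,u_2)$ in $X_1$ or $X_2$; $d_{\mathrm{B}}(X_1,X_2)$ is the infimum of $\varepsilon$ admitting an $\varepsilon$-matching.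 The Betti-0 function $\beta_0^{(X,d_X)}:\mathbf{R}_+\to\mathbf{Z}_+$ is $\delta\mapsto\dim\mathrm{H}_0(\mathcal{R}_\delta(X,d_X))$. For functions $F,G:\mathbf{R}_+\to\mathbf{Z}_+$, $d_{\mathrm{I}}(F,G):=\inf\{\varepsilon\ge0:\forall\delta\in\mathbf{R}_+,\ F(\delta)\ge G(\delta+\varepsilon),\ G(\delta)\ge F(\delta+\varepsilon)\}$. *)

theory Defs
  imports "HOL-Library.Extended_Real" "HOL-Library.Multiset" "HOL-Library.Function_Algebras"
begin

definition finite_metric_space :: "'a set \<Rightarrow> ('a \<Rightarrow> 'a \<Rightarrow> real) \<Rightarrow> bool" where
  "finite_metric_space X d \<longleftrightarrow> finite X \<and>
     (\<forall>x\<in>X. \<forall>y\<in>X. 0 \<le> d x y \<and> (d x y = 0 \<longleftrightarrow> x = y) \<and> d x y = d y x) \<and>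
     (\<forall>x\<in>X. \<forall>y\<in>X. \<forall>z\<in>X. d x z \<le> d x y + d y z)"

definition rips :: "'a set \<Rightarrow> ('a \<Rightarrow> 'a \<Rightarrow> real) \<Rightarrow> real \<Rightarrow> 'a set set" where
  "rips X d \<delta> = {\<sigma>. \<sigma> \<noteq> {} \<and> \<sigma> \<subseteq> X \<and> (\<forall>x\<in>\<sigma>. \<forall>x'\<in>\<sigma>. d x x' \<le> \<delta>)}"

text \<open>Chains are functions from vertices to the field 'k (finitely supported since
  complexes here are finite); the vector space structure is pointwise.\<close>

definition fscale :: "'k::field \<Rightarrow> ('a \<Rightarrow> 'k) \<Rightarrow> ('a \<Rightarrow> 'k)" where
  "fscale c f = (\<lambda>x. c * f x)"

definition vertices :: "'a set set \<Rightarrow> 'a set" where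
  "vertices K = {x. {x} \<in> K}"

definition basis_vec :: "'a \<Rightarrow> ('a \<Rightarrow> 'k::field)" where
  "basis_vec x = (\<lambda>z. if z = x then 1 else 0)"

definition chains0 :: "'k::field itself \<Rightarrow> 'a set set \<Rightarrow> ('a \<Rightarrow> 'k) set" where
  "chains0 _ K = {f. \<forall>x. x \<notin> vertices K \<longrightarrow> f x = 0}"

text \<open>0-boundaries B_0(K) = image of the boundary map on 1-chains.\<close>
definition boundaries0 :: "'k::field itself \<Rightarrow> 'a set set \<Rightarrow> ('a \<Rightarrow> 'k) set" where
  "boundaries0 _ K = module.span fscale
      {basis_vec y - basis_vec x | x y. {x, y} \<in> K \<and> x \<noteq> y}"

definition dimH0 :: "'k::field itself \<Rightarrow> 'a set set \<Rightarrow> nat" where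
  "dimH0 k K = vector_space.dim (fscale :: 'k \<Rightarrow> _) (chains0 k K)
             - vector_space.dim (fscale :: 'k \<Rightarrow> _) (boundaries0 k K)"

text \<open>Rank of the map H_0(K) \<rightarrow> H_0(L) induced by an inclusion K \<subseteq> L:
  its image is (C_0(K) + B_0(L)) / B_0(L).\<close>
definition rankH0 :: "'k::field itself \<Rightarrow> 'a set set \<Rightarrow> 'a set set \<Rightarrow> nat" where
  "rankH0 k K L = vector_space.dim (fscale :: 'k \<Rightarrow> _)
                     (module.span (fscale :: 'k \<Rightarrow> _) (chains0 k K \<union> boundaries0 k L))
                - vector_space.dim (fscale :: 'k \<Rightarrow> _) (boundaries0 k L)"

text \<open>The persistence diagram (barcode) is the multiset of intervals [b,d) of the
  interval decomposition of the persistence module; it is the unique finite multiset of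
  pairs b < d whose intervals reproduce the rank invariant:
  rank(H_0(R_s) \<rightarrow> H_0(R_t)) = #{(b,d) : [s,t] \<subseteq> [b,d)} for all s \<le> t.\<close>
definition dgm0 :: "'k::field itself \<Rightarrow> 'a set \<Rightarrow> ('a \<Rightarrow> 'a \<Rightarrow> real) \<Rightarrow> (ereal \<times> ereal) multiset" where
  "dgm0 k X d = (THE D. (\<forall>p \<in># D. fst p < snd p) \<and>
      (\<forall>s t::real. s \<le> t \<longrightarrow>
         rankH0 k (rips X d s) (rips X d t) =
           size (filter_mset (\<lambda>p. fst p \<le> ereal s \<and> ereal t < snd p) D)))"

text \<open>Coordinate distance on extended reals, with |\<infinity> - \<infinity>| = 0 convention.\<close>
definition cdist :: "ereal \<Rightarrow> ereal \<Rightarrow> ereal" where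
  "cdist a b = (if a = b then 0 else \<bar>a - b\<bar>)"

text \<open>A partial injection between multisets is given by a multiset M of matched pairs,
  whose first projection is a sub-multiset of X1 and second projection of X2.\<close>
definition eps_matching :: "(ereal \<times> ereal) multiset \<Rightarrow> (ereal \<times> ereal) multiset \<Rightarrow>
     ((ereal \<times> ereal) \<times> (ereal \<times> ereal)) multiset \<Rightarrow> real \<Rightarrow> bool" where
  "eps_matching X1 X2 M \<epsilon> \<longleftrightarrow>
     image_mset fst M \<subseteq># X1 \<and> image_mset snd M \<subseteq># X2 \<and>
     (\<forall>m \<in># M. cdist (fst (fst m)) (fst (snd m)) \<le> ereal \<epsilon> \<and>
                cdist (snd (fst m)) (snd (snd m)) \<le> ereal \<epsilon>) \<and>
     (\<forall>u \<in># X1 - image_mset fst M. cdist (snd u) (fst u) \<le> 2 * ereal \<epsilon>) \<and>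
     (\<forall>u \<in># X2 - image_mset snd M. cdist (snd u) (fst u) \<le> 2 * ereal \<epsilon>)"

definition bottleneck_dist :: "(ereal \<times> ereal) multiset \<Rightarrow> (ereal \<times> ereal) multiset \<Rightarrow> ereal" where
  "bottleneck_dist X1 X2 = Inf {ereal \<epsilon> | \<epsilon>. 0 \<le> \<epsilon> \<and> (\<exists>M. eps_matching X1 X2 M \<epsilon>)}"

definition betti0 :: "'k::field itself \<Rightarrow> 'a set \<Rightarrow> ('a \<Rightarrow> 'a \<Rightarrow> real) \<Rightarrow> real \<Rightarrow> nat" where
  "betti0 k X d \<delta> = dimH0 k (rips X d \<delta>)"

text \<open>Functions R_+ \<rightarrow> Z_+ are represented as real \<Rightarrow> nat, only evaluated on \<delta> \<ge> 0.\<close>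
definition interleaving_dist :: "(real \<Rightarrow> nat) \<Rightarrow> (real \<Rightarrow> nat) \<Rightarrow> ereal" where
  "interleaving_dist F G = Inf {ereal \<epsilon> | \<epsilon>. 0 \<le> \<epsilon> \<and>
      (\<forall>\<delta>\<ge>0. G (\<delta> + \<epsilon>) \<le> F \<delta> \<and> F (\<delta> + \<epsilon>) \<le> G \<delta>)}"

end

theory Submission
  imports Defs
begin

lemma sum_fun_apply: "(sum f A) x = (\<Sum>a\<in>A. f a x)"
  by (induction A rule: infinite_finite_induct) auto

lemma vs_fscale: "vector_space (fscale :: 'k::field \<Rightarrow> ('a \<Rightarrow> 'k) \<Rightarrow> ('a \<Rightarrow> 'k))"
  by unfold_locales (auto simp: fscale_def algebra_simps)

interpretation fs: vector_space "fscale :: 'k::field \<Rightarrow> ('a \<Rightarrow> 'k) \<Rightarrow> ('a \<Rightarrow> 'k)"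
  by (rule vs_fscale)

lemma chains0_subspace: "fs.subspace (chains0 TYPE('k::field) K :: ('a \<Rightarrow> 'k) set)"
  unfolding fs.subspace_def chains0_def fscale_def by auto

lemma dim_chains0:
  assumes "finite (vertices K)"
  shows "fs.dim (chains0 TYPE('k::field) K :: ('a \<Rightarrow> 'k) set) = card (vertices K)"
proof -
  let ?B = "(basis_vec :: 'a \<Rightarrow> 'a \<Rightarrow> 'k) ` vertices K"
  have inj: "inj_on (basis_vec :: 'a \<Rightarrow> 'a \<Rightarrow> 'k) (vertices K)"
    by (rule inj_onI) (metis basis_vec_def one_neq_zero)
  have sub: "?B \<subseteq> chains0 TYPE('k) K"
    by (auto simp: chains0_def basis_vec_def)
  have sup: "chains0 TYPE('k) K \<subseteq> fs.span ?B"
  proof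
    fix g :: "'a \<Rightarrow> 'k" assume g: "g \<in> chains0 TYPE('k) K"
    have "g = (\<Sum>x\<in>vertices K. fscale (g x) (basis_vec x))"
    proof
      fix z
      show "g z = (\<Sum>x\<in>vertices K. fscale (g x) (basis_vec x)) z"
        using g assms by (cases "z \<in> vertices K") (auto simp: sum_fun_apply fscale_def basis_vec_def chains0_def if_distrib[where f="\<lambda>u. _ * u"] cong: if_cong)
    qed
    also have "\<dots> \<in> fs.span ?B"
      by (intro fs.span_sum fs.span_scale fs.span_base) auto
    finally show "g \<in> fs.span ?B" .
  qed
  have span: "fs.span ?B = fs.span (chains0 TYPE('k) K)"
    using fs.span_subspace[OF sub sup chains0_subspace] chains0_subspace fs.span_eq_iff by metis
  have ind: "fs.independent ?B"
  proof (rule fs.independent_if_scalars_zero)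
    show "finite ?B" using assms by simp
  next
    fix c :: "('a \<Rightarrow> 'k) \<Rightarrow> 'k" and v assume h: "(\<Sum>x\<in>?B. fscale (c x) x) = 0" and v: "v \<in> ?B"
    then obtain z where z: "z \<in> vertices K" "v = basis_vec z" by auto
    have "0 = (\<Sum>x\<in>?B. fscale (c x) x) z" using h by simp
    also have "\<dots> = (\<Sum>x\<in>?B. c x * x z)" by (simp add: sum_fun_apply fscale_def)
    also have "\<dots> = (\<Sum>x\<in>{v}. c x * x z)"
      apply (rule sum.mono_neutral_right)
      using assms z by (auto simp: basis_vec_def split: if_splits)
    also have "\<dots> = c v" using z by (simp add: basis_vec_def)
    finally show "c v = 0" by simp
  qed
  show ?thesis using fs.dim_eq_card[OF span ind] card_image[OF inj] by simp
qed

definition cls :: "'a set \<Rightarrow> ('a \<times> 'a) set \<Rightarrow> 'a \<Rightarrow> 'a set" where "cls V E x = {y\<in>V. (x,y) \<in> E\<^sup>*}"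
definition rep :: "'a set \<Rightarrow> ('a \<times> 'a) set \<Rightarrow> ('a \<Rightarrow> nat) \<Rightarrow> 'a \<Rightarrow> 'a" where "rep V E f x = inv_into V f (Min (f ` cls V E x))"
definition reps :: "'a set \<Rightarrow> ('a \<times> 'a) set \<Rightarrow> ('a \<Rightarrow> nat) \<Rightarrow> 'a set" where "reps V E f = {x\<in>V. \<forall>y\<in>V. f y < f x \<longrightarrow> (x,y) \<notin> E\<^sup>*}"
definition Gen :: "('a \<times> 'a) set \<Rightarrow> ('a \<Rightarrow> 'k::field) set" where
  "Gen E = {basis_vec y - basis_vec x | x y. (x,y) \<in> E \<and> x \<noteq> y}"
definition bvec :: "'a set \<Rightarrow> ('a \<times> 'a) set \<Rightarrow> ('a \<Rightarrow> nat) \<Rightarrow> 'a \<Rightarrow> ('a \<Rightarrow> 'k::field)" where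
  "bvec V E f x = basis_vec x - basis_vec (rep V E f x)"

context
  fixes V :: "'a set" and E :: "('a \<times> 'a) set" and f :: "'a \<Rightarrow> nat"
  assumes finV: "finite V" and EV: "E \<subseteq> V \<times> V" and symE: "sym E" and injf: "inj_on f V"
begin


lemma rt_V: "(x,y) \<in> E\<^sup>* \<Longrightarrow> x \<in> V \<Longrightarrow> y \<in> V"
  by (induction rule: rtrancl_induct) (use EV in auto)

lemma rt_sym: "(x,y) \<in> E\<^sup>* \<Longrightarrow> (y,x) \<in> E\<^sup>*"
  using sym_rtrancl[OF symE] by (auto simp: sym_def)

lemma rep_props:
  assumes "x \<in> V"
  shows "(rep V E f) x \<in> V" "(x, (rep V E f) x) \<in> E\<^sup>*" "\<And>z. z \<in> V \<Longrightarrow> (x,z) \<in> E\<^sup>* \<Longrightarrow> f ((rep V E f) x) \<le> f z"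
proof -
  have fin: "finite (f ` (cls V E) x)" using finV by (simp add: cls_def)
  have ne: "f ` (cls V E) x \<noteq> {}" using assms by (auto simp: cls_def)
  obtain y where y: "y \<in> (cls V E) x" "f y = Min (f ` (cls V E) x)" using Min_in[OF fin ne] by auto
  have yV: "y \<in> V" using y(1) by (simp add: cls_def)
  have r: "(rep V E f) x = y" unfolding rep_def using y(2)[symmetric] inv_into_f_f[OF injf yV] by simp
  show "(rep V E f) x \<in> V" "(x, (rep V E f) x) \<in> E\<^sup>*" using r y by (auto simp: cls_def)
  show "\<And>z. z \<in> V \<Longrightarrow> (x,z) \<in> E\<^sup>* \<Longrightarrow> f ((rep V E f) x) \<le> f z"
    using r y fin by (auto simp: cls_def)
qed

lemma cls_eq: "(x,y) \<in> E\<^sup>* \<Longrightarrow> (cls V E) x = (cls V E) y"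
  unfolding cls_def using rt_sym by (meson rtrancl_trans)

lemma rep_eq: "(x,y) \<in> E\<^sup>* \<Longrightarrow> (rep V E f) x = (rep V E f) y"
  unfolding rep_def using cls_eq by simp

lemma reps_iff: "x \<in> V \<Longrightarrow> x \<in> (reps V E f) \<longleftrightarrow> (rep V E f) x = x"
proof
  assume x: "x \<in> V" "x \<in> (reps V E f)"
  have "\<not> f ((rep V E f) x) < f x" using x rep_props[OF x(1)] by (auto simp: reps_def)
  moreover have "f ((rep V E f) x) \<le> f x" using rep_props(3)[OF x(1) x(1)] by simp
  ultimately show "(rep V E f) x = x" using injf rep_props(1)[OF x(1)] x(1) by (meson inj_onD le_neq_implies_less)
next
  assume x: "x \<in> V" "(rep V E f) x = x"
  show "x \<in> (reps V E f)" unfolding reps_def using x rep_props(3)[OF x(1)] by (auto dest: leD)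
qed

lemma rep_rep: "x \<in> V \<Longrightarrow> (rep V E f) ((rep V E f) x) = (rep V E f) x"
  using rep_eq[OF rep_props(2)] by simp

lemma rep_in_reps: "x \<in> V \<Longrightarrow> (rep V E f) x \<in> (reps V E f)"
  using reps_iff[OF rep_props(1)] rep_rep by simp



lemma path_in_span: "(x,y) \<in> E\<^sup>* \<Longrightarrow> (basis_vec y - basis_vec x :: 'a \<Rightarrow> 'k::field) \<in> fs.span (Gen E)"
proof (induction rule: rtrancl_induct)
  case base then show ?case by (metis diff_self fs.span_zero)
next
  case (step y z)
  have zy: "(basis_vec z - basis_vec y :: 'a \<Rightarrow> 'k) \<in> fs.span (Gen E)"
  proof (cases "y = z")
    case True then show ?thesis by (metis diff_self fs.span_zero)
  next
    case False then show ?thesis using step(2) by (intro fs.span_base) (auto simp: Gen_def)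
  qed
  have eq: "basis_vec z - basis_vec x = (basis_vec z - basis_vec y) + (basis_vec y - basis_vec x :: 'a \<Rightarrow> 'k)"
    by (simp add: fun_eq_iff)
  show ?case unfolding eq by (rule fs.span_add[OF zy step(3)])
qed

lemma dim_Gen: "fs.dim ((Gen E) :: ('a \<Rightarrow> 'k::field) set) = card V - card (reps V E f)"
proof -
  let ?B = "((bvec V E f) :: 'a \<Rightarrow> 'a \<Rightarrow> 'k) ` (V - (reps V E f))"
  have repsV: "(reps V E f) \<subseteq> V" by (auto simp: reps_def)
  have nz: "x \<in> V - (reps V E f) \<Longrightarrow> (rep V E f) x \<noteq> x" for x using reps_iff by auto
  have ev: "x \<in> V - (reps V E f) \<Longrightarrow> z \<in> V - (reps V E f) \<Longrightarrow> ((bvec V E f) x :: 'a \<Rightarrow> 'k) z = (if z = x then 1 else 0)" for x z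
    using rep_in_reps[of x] by (auto simp: bvec_def basis_vec_def)
  have inj: "inj_on ((bvec V E f) :: 'a \<Rightarrow> 'a \<Rightarrow> 'k) (V - (reps V E f))"
  proof (rule inj_onI)
    fix x y assume "x \<in> V - (reps V E f)" "y \<in> V - (reps V E f)" "((bvec V E f) x :: 'a \<Rightarrow> 'k) = (bvec V E f) y"
    then have "((bvec V E f) x :: 'a \<Rightarrow> 'k) x = (bvec V E f) y x" by simp
    then show "x = y" using ev \<open>x \<in> V - (reps V E f)\<close> \<open>y \<in> V - (reps V E f)\<close> by (auto split: if_splits)
  qed
  have all: "((bvec V E f) x :: 'a \<Rightarrow> 'k) \<in> fs.span ?B" if "x \<in> V" for x
  proof (cases "x \<in> (reps V E f)")
    case True then show ?thesis using reps_iff[of x] \<open>x \<in> V\<close> by (metis bvec_def diff_self fs.span_zero)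
  next
    case False then show ?thesis using \<open>x \<in> V\<close> by (intro fs.span_base) auto
  qed
  have s1: "(Gen E) \<subseteq> fs.span ?B"
  proof
    fix g assume "g \<in> ((Gen E) :: ('a \<Rightarrow> 'k) set)"
    then obtain x y where xy: "(x,y) \<in> E" "g = basis_vec y - basis_vec x" by (auto simp: Gen_def)
    have V: "x \<in> V" "y \<in> V" using xy EV by auto
    have "(rep V E f) x = (rep V E f) y" using rep_eq xy by auto
    then have "g = (bvec V E f) y - (bvec V E f) x" using xy by (simp add: bvec_def)
    then show "g \<in> fs.span ?B" using all V fs.span_diff by metis
  qed
  have s2: "?B \<subseteq> fs.span (Gen E)"
  proof
    fix g assume "g \<in> ?B"
    then obtain x where x: "x \<in> V" "g = (bvec V E f) x" by auto
    have "basis_vec ((rep V E f) x) - basis_vec x \<in> fs.span ((Gen E) :: ('a \<Rightarrow> 'k) set)"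
      using path_in_span rep_props(2)[OF x(1)] by blast
    from fs.span_neg[OF this] show "g \<in> fs.span (Gen E)" using x by (simp add: bvec_def)
  qed
  have span: "fs.span ?B = fs.span (Gen E)" using fs.span_eq[THEN iffD2, OF conjI[OF s2 s1]] .
  have ind: "fs.independent ?B"
  proof (rule fs.independent_if_scalars_zero)
    show "finite ?B" using finV by simp
  next
    fix c :: "('a \<Rightarrow> 'k) \<Rightarrow> 'k" and v assume h: "(\<Sum>x\<in>?B. fscale (c x) x) = 0" and v: "v \<in> ?B"
    then obtain z where z: "z \<in> V - (reps V E f)" "v = (bvec V E f) z" by auto
    have "0 = (\<Sum>x\<in>?B. fscale (c x) x) z" using h by simp
    also have "\<dots> = (\<Sum>x\<in>?B. c x * x z)" by (simp add: sum_fun_apply fscale_def)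
    also have "\<dots> = (\<Sum>x\<in>{v}. c x * x z)"
    proof (rule sum.mono_neutral_right)
      show "finite ?B" using finV by simp
      show "{v} \<subseteq> ?B" using v by simp
      show "\<forall>x\<in>?B - {v}. c x * x z = 0"
      proof
        fix x assume x: "x \<in> ?B - {v}"
        then obtain w where w: "w \<in> V - (reps V E f)" "x = (bvec V E f) w" by auto
        then have "w \<noteq> z" using x z by auto
        then show "c x * x z = 0" using ev[OF w(1) z(1)] w by simp
      qed
    qed
    also have "\<dots> = c v" using z ev by simp
    finally show "c v = 0" by simp
  qed
  have "fs.dim ((Gen E) :: ('a \<Rightarrow> 'k) set) = card ?B" using fs.dim_eq_card[OF span ind] .
  also have "\<dots> = card (V - (reps V E f))" using card_image[OF inj] .
  also have "\<dots> = card V - card (reps V E f)" using card_Diff_subset[OF _ repsV] finite_subset[OF repsV finV] by simp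
  finally show ?thesis .
qed

end

definition Et :: "'a set \<Rightarrow> ('a \<Rightarrow> 'a \<Rightarrow> real) \<Rightarrow> real \<Rightarrow> ('a \<times> 'a) set" where
  "Et X d t = {(a,b). a \<in> X \<and> b \<in> X \<and> d a b \<le> t}"

context
  fixes X :: "'a set" and d :: "'a \<Rightarrow> 'a \<Rightarrow> real"
  assumes ms: "finite_metric_space X d"
begin

lemma finX: "finite X" using ms by (simp add: finite_metric_space_def)
lemma d0: "x \<in> X \<Longrightarrow> d x x = 0" using ms by (simp add: finite_metric_space_def)
lemma dsym: "x \<in> X \<Longrightarrow> y \<in> X \<Longrightarrow> d x y = d y x" using ms by (simp add: finite_metric_space_def)
lemma dpos: "x \<in> X \<Longrightarrow> y \<in> X \<Longrightarrow> x \<noteq> y \<Longrightarrow> 0 < d x y"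
  using ms unfolding finite_metric_space_def by (metis order_le_less)

lemma vertices_rips: "vertices (rips X d t) = (if 0 \<le> t then X else {})"
  by (auto simp: vertices_def rips_def d0)

lemma edge_rips: "0 \<le> t \<Longrightarrow> {x,y} \<in> rips X d t \<longleftrightarrow> (x,y) \<in> Et X d t"
  by (auto simp: rips_def Et_def d0 dsym)

lemma Et_sub: "Et X d t \<subseteq> X \<times> X" by (auto simp: Et_def)
lemma Et_sym: "sym (Et X d t)" by (auto simp: Et_def sym_def dsym)

lemma boundaries_rips: "0 \<le> t \<Longrightarrow>
  boundaries0 TYPE('k::field) (rips X d t) = fs.span (Gen (Et X d t) :: ('a \<Rightarrow> 'k) set)"
  unfolding boundaries0_def Gen_def using edge_rips by presburger

lemma dimH0_rips:
  assumes t: "0 \<le> t" and inj: "inj_on f X"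
  shows "dimH0 TYPE('k::field) (rips X d t) = card (reps X (Et X d t) f)"
proof -
  have c: "fs.dim (chains0 TYPE('k) (rips X d t) :: ('a \<Rightarrow> 'k) set) = card X"
    using dim_chains0[of "rips X d t"] finX t by (simp add: vertices_rips)
  have b: "fs.dim (boundaries0 TYPE('k) (rips X d t) :: ('a \<Rightarrow> 'k) set) = card X - card (reps X (Et X d t) f)"
  proof -
    have "fs.dim (boundaries0 TYPE('k) (rips X d t) :: ('a \<Rightarrow> 'k) set) = fs.dim (fs.span (Gen (Et X d t)) :: ('a \<Rightarrow> 'k) set)"
      by (subst boundaries_rips[OF t]) (rule refl)
    also have "\<dots> = fs.dim (Gen (Et X d t) :: ('a \<Rightarrow> 'k) set)" by (rule fs.dim_span)
    also have "\<dots> = card X - card (reps X (Et X d t) f)" by (rule dim_Gen[OF finX Et_sub Et_sym inj])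
    finally show ?thesis .
  qed
  have "reps X (Et X d t) f \<subseteq> X" by (auto simp: reps_def)
  then have "card (reps X (Et X d t) f) \<le> card X" using finX card_mono by blast
  then show ?thesis unfolding dimH0_def using c b by simp
qed

lemma rank_pos:
  assumes "0 \<le> s" "s \<le> t"
  shows "rankH0 TYPE('k::field) (rips X d s) (rips X d t) = dimH0 TYPE('k) (rips X d t)"
proof -
  have t: "0 \<le> t" using assms by simp
  have cc: "chains0 TYPE('k) (rips X d s) = (chains0 TYPE('k) (rips X d t) :: ('a \<Rightarrow> 'k) set)"
    using assms by (simp add: chains0_def vertices_rips)
  have g: "(Gen (Et X d t) :: ('a \<Rightarrow> 'k) set) \<subseteq> chains0 TYPE('k) (rips X d t)"
    using t by (auto simp: Gen_def Et_def chains0_def vertices_rips basis_vec_def)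
  have "boundaries0 TYPE('k) (rips X d t) \<subseteq> (chains0 TYPE('k) (rips X d t) :: ('a \<Rightarrow> 'k) set)"
    unfolding boundaries_rips[OF t] by (rule fs.span_minimal[OF g chains0_subspace])
  then have "chains0 TYPE('k) (rips X d s) \<union> boundaries0 TYPE('k) (rips X d t) = (chains0 TYPE('k) (rips X d t) :: ('a \<Rightarrow> 'k) set)"
    using cc by blast
  then show ?thesis unfolding rankH0_def dimH0_def by (simp add: fs.dim_span)
qed

lemma rank_neg:
  assumes "s < 0"
  shows "rankH0 TYPE('k::field) (rips X d s) L = 0"
proof -
  have cc: "chains0 TYPE('k) (rips X d s) = ({0} :: ('a \<Rightarrow> 'k) set)"
    using assms by (auto simp: chains0_def vertices_rips)
  show ?thesis unfolding rankH0_def cc by (simp add: fs.dim_span)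
qed

end

definition cnt :: "ereal multiset \<Rightarrow> real \<Rightarrow> nat" where
  "cnt M t = size (filter_mset (\<lambda>a. ereal t < a) M)"

definition dl :: "ereal multiset \<Rightarrow> ereal list" where
  "dl M = rev (sorted_list_of_multiset M)"

lemma mset_dl[simp]: "mset (dl M) = M" by (simp add: dl_def)
lemma length_dl: "length (dl M) = size M" by (metis mset_dl size_mset)
lemma set_dl: "set (dl M) = set_mset M" by (metis mset_dl set_mset_mset)

lemma sorted_dl: "sorted_wrt (\<ge>) (dl M)"
  unfolding dl_def sorted_wrt_rev using sorted_sorted_list_of_multiset[of M]
  by simp

lemma dl_mono: "i \<le> j \<Longrightarrow> j < length (dl M) \<Longrightarrow> dl M ! j \<le> dl M ! i"
  using sorted_wrt_nth_less[OF sorted_dl, of i j M] by (cases "i = j") auto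

lemma cnt_iff: "i < cnt M t \<longleftrightarrow> (i < size M \<and> ereal t < dl M ! i)"
proof -
  let ?xs = "dl M"
  have c: "cnt M t = card {j. j < length ?xs \<and> ereal t < ?xs ! j}"
    unfolding cnt_def using mset_filter[of "\<lambda>a. ereal t < a" ?xs]
    by (metis length_filter_conv_card mset_dl size_mset)
  show ?thesis
  proof
    assume i: "i < cnt M t"
    show "i < size M \<and> ereal t < dl M ! i"
    proof (rule ccontr)
      assume n: "\<not> (i < size M \<and> ereal t < dl M ! i)"
      have "{j. j < length ?xs \<and> ereal t < ?xs ! j} \<subseteq> {..<i}"
      proof
        fix j assume j: "j \<in> {j. j < length ?xs \<and> ereal t < ?xs ! j}"
        show "j \<in> {..<i}"
        proof (rule ccontr)
          assume "j \<notin> {..<i}"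
          then have "i \<le> j" by simp
          then have "?xs ! j \<le> ?xs ! i" "i < size M" using dl_mono j by (auto simp: length_dl)
          then show False using n j by auto
        qed
      qed
      then have "cnt M t \<le> i" unfolding c by (metis card_lessThan card_mono finite_lessThan)
      then show False using i by simp
    qed
  next
    assume i: "i < size M \<and> ereal t < dl M ! i"
    have "{..i} \<subseteq> {j. j < length ?xs \<and> ereal t < ?xs ! j}"
    proof
      fix j assume "j \<in> {..i}"
      then have "j \<le> i" by simp
      then show "j \<in> {j. j < length ?xs \<and> ereal t < ?xs ! j}"
        using dl_mono[of j i M] i by (auto simp: length_dl)
    qed
    then have "Suc i \<le> cnt M t" unfolding c
      by (metis (no_types, lifting) card_atMost card_mono finite_nat_set_iff_bounded mem_Collect_eq)
    then show "i < cnt M t" by simp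
  qed
qed

lemma cnt_zero: "\<forall>a\<in>#M. 0 < a \<Longrightarrow> cnt M 0 = size M"
  unfolding cnt_def by (metis filter_mset_True filter_mset_cong zero_ereal_def)

lemma cnt_unique:
  assumes A: "\<forall>a\<in>#A. 0 < a" and B: "\<forall>a\<in>#B. 0 < a"
    and eq: "\<And>t. 0 \<le> t \<Longrightarrow> cnt A t = cnt B t"
  shows "A = B"
proof -
  have len: "size A = size B" using eq[of 0] cnt_zero[OF A] cnt_zero[OF B] by simp
  have nth: "dl A ! i = dl B ! i" if i: "i < size A" for i
  proof (rule ccontr)
    assume ne: "dl A ! i \<noteq> dl B ! i"
    have pos: "0 < dl A ! i" "0 < dl B ! i"
      using A B i len nth_mem[of i "dl A"] nth_mem[of i "dl B"] by (auto simp: length_dl set_dl)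
    have key: False if lt: "dl M ! i < dl N ! i" and pM: "0 < dl M ! i" and sz: "i < size M" "i < size N"
        and e: "cnt M z = cnt N z" and z: "dl M ! i < ereal z" "ereal z < dl N ! i" "0 \<le> z" for M N z
    proof -
      have "i < cnt N z" using cnt_iff z sz by blast
      moreover have "\<not> i < cnt M z" using cnt_iff z by (meson not_less_iff_gr_or_eq)
      ultimately show False using e by simp
    qed
    show False
    proof (cases "dl A ! i < dl B ! i")
      case True
      obtain z where z: "dl A ! i < ereal z" "ereal z < dl B ! i" using ereal_dense2[OF True] by blast
      have "0 \<le> z" using z pos by (metis ereal_less_eq(5) less_trans order_less_imp_le zero_ereal_def)
      then show False using key[OF True pos(1)] i len eq z by simp
    next
      case False
      then have lt: "dl B ! i < dl A ! i" using ne by simp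
      obtain z where z: "dl B ! i < ereal z" "ereal z < dl A ! i" using ereal_dense2[OF lt] by blast
      have "0 \<le> z" using z pos by (metis ereal_less_eq(5) less_trans order_less_imp_le zero_ereal_def)
      then show False using key[OF lt pos(2)] i len eq[of z, symmetric] z by simp
    qed
  qed
  have "dl A = dl B" by (rule nth_equalityI) (use len nth in \<open>auto simp: length_dl\<close>)
  then show ?thesis by (metis mset_dl)
qed

lemma pair_bound:
  assumes A: "\<forall>a\<in>#A. 0 < a" and eps: "0 \<le> \<epsilon>"
    and h: "\<And>t. 0 \<le> t \<Longrightarrow> cnt B (t + \<epsilon>) \<le> cnt A t"
    and i: "i < size A" "i < size B"
  shows "dl B ! i \<le> dl A ! i + ereal \<epsilon>"
proof (rule ccontr)
  assume "\<not> dl B ! i \<le> dl A ! i + ereal \<epsilon>"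
  then have lt: "dl A ! i + ereal \<epsilon> < dl B ! i" by simp
  have pos: "0 < dl A ! i" using A i nth_mem[of i "dl A"] by (auto simp: length_dl set_dl)
  have fin: "dl A ! i \<noteq> \<infinity>" using lt by auto
  then obtain r where r: "dl A ! i = ereal r" using pos by (cases "dl A ! i") auto
  have r0: "0 \<le> r" using pos r by simp
  have "i < cnt B (r + \<epsilon>)" using cnt_iff i lt r by simp
  also have "\<dots> \<le> cnt A r" using h r0 by simp
  finally have "ereal r < dl A ! i" using cnt_iff by blast
  then show False using r by simp
qed

lemma tail_bound:
  assumes A: "\<forall>a\<in>#A. 0 < a" and eps: "0 \<le> \<epsilon>"
    and h: "cnt A (0 + \<epsilon>) \<le> cnt B 0"
    and j: "size B \<le> j" "j < size A"
  shows "dl A ! j \<le> ereal \<epsilon>"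
proof (rule ccontr)
  assume "\<not> dl A ! j \<le> ereal \<epsilon>"
  then have "j < cnt A (0 + \<epsilon>)" using cnt_iff j by simp
  also have "\<dots> \<le> cnt B 0" by (rule h)
  also have "\<dots> \<le> size B" unfolding cnt_def by (rule size_filter_mset_lesseq)
  finally show False using j by simp
qed

lemma cdist_le:
  assumes "a \<le> b + ereal e" "b \<le> a + ereal e" "0 < a" "0 < b" "0 \<le> e"
  shows "cdist a b \<le> ereal e"
proof (cases "a = b")
  case True
  then have "0 \<le> ereal e" using assms by simp
  then show ?thesis using True by (simp add: cdist_def)
next
  case False
  then show ?thesis using assms unfolding cdist_def
    by (cases a; cases b) auto
qed

lemma matching_exists:
  assumes A: "\<forall>a\<in>#A. 0 < a" and B: "\<forall>a\<in>#B. 0 < a" and eps: "0 \<le> \<epsilon>"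
    and h1: "\<And>t. 0 \<le> t \<Longrightarrow> cnt B (t + \<epsilon>) \<le> cnt A t"
    and h2: "\<And>t. 0 \<le> t \<Longrightarrow> cnt A (t + \<epsilon>) \<le> cnt B t"
  shows "\<exists>M. eps_matching (image_mset (Pair 0) A) (image_mset (Pair 0) B) M \<epsilon>"
proof -
  define xs where "xs = map (Pair (0::ereal)) (dl A)"
  define ys where "ys = map (Pair (0::ereal)) (dl B)"
  define k where "k = min (size A) (size B)"
  define M where "M = mset (zip xs ys)"
  have X1: "image_mset (Pair 0) A = mset xs" unfolding xs_def by (metis mset_dl mset_map)
  have X2: "image_mset (Pair 0) B = mset ys" unfolding ys_def by (metis mset_dl mset_map)
  have lx: "length xs = size A" "length ys = size B" by (simp_all add: xs_def ys_def length_dl)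
  have f1: "image_mset fst M = mset (take k xs)"
    unfolding M_def k_def by (metis lx map_fst_zip_take mset_map min.commute take_all_iff take_take linorder_le_cases)
  have f2: "image_mset snd M = mset (take k ys)"
    unfolding M_def k_def by (metis lx map_snd_zip_take mset_map min.commute take_all_iff take_take linorder_le_cases)
  have d1: "mset xs - mset (take k xs) = mset (drop k xs)"
    by (metis add_diff_cancel_left' append_take_drop_id mset_append)
  have d2: "mset ys - mset (take k ys) = mset (drop k ys)"
    by (metis add_diff_cancel_left' append_take_drop_id mset_append)
  have s1: "mset (take k xs) \<subseteq># mset xs"
    by (metis append_take_drop_id mset_append mset_subset_eq_add_left)
  have s2: "mset (take k ys) \<subseteq># mset ys"
    by (metis append_take_drop_id mset_append mset_subset_eq_add_left)
  have pairs: "\<forall>m\<in>#M. cdist (fst (fst m)) (fst (snd m)) \<le> ereal \<epsilon> \<and> cdist (snd (fst m)) (snd (snd m)) \<le> ereal \<epsilon>"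
  proof
    fix m assume "m \<in># M"
    then obtain i where i: "i < size A" "i < size B" "m = (xs ! i, ys ! i)"
      unfolding M_def using lx by (auto simp: set_zip)
    have pa: "0 < dl A ! i" using A i nth_mem[of i "dl A"] by (auto simp: length_dl set_dl)
    have pb: "0 < dl B ! i" using B i nth_mem[of i "dl B"] by (auto simp: length_dl set_dl)
    have "cdist (dl A ! i) (dl B ! i) \<le> ereal \<epsilon>"
      using cdist_le[OF pair_bound[OF B eps h2 i(2) i(1)] pair_bound[OF A eps h1 i(1) i(2)] pa pb eps] .
    then show "cdist (fst (fst m)) (fst (snd m)) \<le> ereal \<epsilon> \<and> cdist (snd (fst m)) (snd (snd m)) \<le> ereal \<epsilon>"
      using i eps by (simp add: xs_def ys_def length_dl cdist_def)
  qed
  have u1: "\<forall>u\<in>#mset (drop k xs). cdist (snd u) (fst u) \<le> 2 * ereal \<epsilon>"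
  proof
    fix u assume "u \<in># mset (drop k xs)"
    then obtain j where j: "k \<le> j" "j < size A" "u = xs ! j"
      using lx by (auto simp: in_set_conv_nth) (metis add.commute less_diff_conv le_add2)
    have jB: "size B \<le> j" using j unfolding k_def by simp
    have pa: "0 < dl A ! j" using A j nth_mem[of j "dl A"] by (auto simp: length_dl set_dl)
    have le: "dl A ! j \<le> ereal \<epsilon>" using tail_bound[OF A eps h2[of 0] jB j(2)] by simp
    have "cdist (dl A ! j) 0 \<le> 2 * ereal \<epsilon>" using pa le eps unfolding cdist_def
      by (cases "dl A ! j") auto
    then show "cdist (snd u) (fst u) \<le> 2 * ereal \<epsilon>" using j by (simp add: xs_def length_dl)
  qed
  have u2: "\<forall>u\<in>#mset (drop k ys). cdist (snd u) (fst u) \<le> 2 * ereal \<epsilon>"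
  proof
    fix u assume "u \<in># mset (drop k ys)"
    then obtain j where j: "k \<le> j" "j < size B" "u = ys ! j"
      using lx by (auto simp: in_set_conv_nth) (metis add.commute less_diff_conv le_add2)
    have jA: "size A \<le> j" using j unfolding k_def by simp
    have pa: "0 < dl B ! j" using B j nth_mem[of j "dl B"] by (auto simp: length_dl set_dl)
    have le: "dl B ! j \<le> ereal \<epsilon>" using tail_bound[OF B eps h1[of 0] jA j(2)] by simp
    have "cdist (dl B ! j) 0 \<le> 2 * ereal \<epsilon>" using pa le eps unfolding cdist_def
      by (cases "dl B ! j") auto
    then show "cdist (snd u) (fst u) \<le> 2 * ereal \<epsilon>" using j by (simp add: ys_def length_dl)
  qed
  have "eps_matching (image_mset (Pair 0) A) (image_mset (Pair 0) B) M \<epsilon>"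
    unfolding eps_matching_def X1 X2 f1 f2 d1 d2 using s1 s2 pairs u1 u2 by blast
  then show ?thesis by blast
qed

lemma size_filter_pair0:
  "size (filter_mset (\<lambda>p. fst p \<le> ereal s \<and> ereal t < snd p) (image_mset (Pair 0) A))
     = (if 0 \<le> s then cnt A t else 0)"
proof (cases "0 \<le> s")
  case True
  then show ?thesis unfolding cnt_def filter_mset_image_mset by simp
next
  case False
  then have "filter_mset (\<lambda>p. fst p \<le> ereal s \<and> ereal t < snd p) (image_mset (Pair 0) A) = {#}"
    by (auto simp: filter_mset_eq_conv)
  then show ?thesis using False by simp
qed

context
  fixes X :: "'a set" and d :: "'a \<Rightarrow> 'a \<Rightarrow> real" and f :: "'a \<Rightarrow> nat"
  assumes ms: "finite_metric_space X d" and injf: "inj_on f X"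
begin

definition "PP x t \<longleftrightarrow> (\<exists>y\<in>X. f y < f x \<and> (x,y) \<in> (Et X d t)\<^sup>*)"
definition "Dset = (\<lambda>(a,b). d a b) ` (X \<times> X)"
definition "tau x = (if {v\<in>Dset. PP x v} = {} then \<infinity> else ereal (Min {v\<in>Dset. PP x v}))"

lemma reps_PP: "x \<in> X \<Longrightarrow> x \<in> reps X (Et X d t) f \<longleftrightarrow> \<not> PP x t"
  by (auto simp: reps_def PP_def)

lemma Et_mono: "s \<le> t \<Longrightarrow> Et X d s \<subseteq> Et X d t"
  by (auto simp: Et_def)

lemma PP_mono: "PP x s \<Longrightarrow> s \<le> t \<Longrightarrow> PP x t"
  unfolding PP_def using rtrancl_mono[OF Et_mono] by blast

lemma finD: "finite Dset"
  unfolding Dset_def using finX[OF ms] by simp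

lemma PP_red:
  assumes t: "0 \<le> t" and P: "PP x t"
  shows "\<exists>v\<in>Dset. v \<le> t \<and> PP x v"
proof -
  obtain y where y: "y \<in> X" using P by (auto simp: PP_def)
  let ?S = "{v\<in>Dset. v \<le> t}"
  have fin: "finite ?S" using finD by simp
  have ne: "?S \<noteq> {}" using y t d0[OF ms y] unfolding Dset_def by force
  define g where "g = Max ?S"
  have g: "g \<in> Dset" "g \<le> t" using Max_in[OF fin ne] by (auto simp: g_def)
  have "Et X d t \<subseteq> Et X d g"
  proof
    fix p assume "p \<in> Et X d t"
    then obtain a b where p: "p = (a,b)" "a \<in> X" "b \<in> X" "d a b \<le> t" by (auto simp: Et_def)
    then have "d a b \<in> ?S" unfolding Dset_def by force
    then have "d a b \<le> g" unfolding g_def using fin by simp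
    then show "p \<in> Et X d g" using p by (auto simp: Et_def)
  qed
  then have "PP x g" using P unfolding PP_def using rtrancl_mono by blast
  then show ?thesis using g by blast
qed

lemma tau_iff:
  assumes t: "0 \<le> t"
  shows "ereal t < tau x \<longleftrightarrow> \<not> PP x t"
proof (cases "{v\<in>Dset. PP x v} = {}")
  case True
  then show ?thesis using PP_red[OF t] by (auto simp: tau_def)
next
  case False
  let ?S = "{v\<in>Dset. PP x v}"
  have fin: "finite ?S" using finD by simp
  have m: "Min ?S \<in> ?S" using Min_in[OF fin False] .
  have tx: "tau x = ereal (Min ?S)" using False by (simp add: tau_def)
  show ?thesis
  proof
    assume lt: "ereal t < tau x"
    show "\<not> PP x t"
    proof
      assume "PP x t"
      then obtain v where v: "v \<in> Dset" "v \<le> t" "PP x v" using PP_red[OF t] by blast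
      then have "Min ?S \<le> v" using fin by simp
      then show False using lt v tx by simp
    qed
  next
    assume n: "\<not> PP x t"
    have "\<not> Min ?S \<le> t" using PP_mono m n by blast
    then show "ereal t < tau x" using tx by simp
  qed
qed

lemma not_PP0: "\<not> PP x 0"
proof
  assume "PP x 0"
  then obtain y where y: "y \<in> X" "f y < f x" "(x,y) \<in> (Et X d 0)\<^sup>*" by (auto simp: PP_def)
  have "x = y" using y(3)
  proof (induction rule: rtrancl_induct)
    case base then show ?case by simp
  next
    case (step b c)
    then have "b \<in> X" "c \<in> X" "d b c \<le> 0" by (auto simp: Et_def)
    then have "b = c" using dpos[OF ms] by force
    then show ?case using step by simp
  qed
  then show False using y by simp
qed

lemma tau_pos: "0 < tau x"
  using tau_iff[of 0] not_PP0 by (simp add: zero_ereal_def)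

definition "A0 = image_mset tau (mset_set X)"

lemma cnt_A0: "0 \<le> t \<Longrightarrow> cnt A0 t = card (reps X (Et X d t) f)"
proof -
  assume t: "0 \<le> t"
  have "cnt A0 t = card {x\<in>X. ereal t < tau x}"
    unfolding cnt_def A0_def filter_mset_image_mset using finX[OF ms] by simp
  also have "{x\<in>X. ereal t < tau x} = reps X (Et X d t) f"
    using tau_iff[OF t] reps_PP by (auto simp: reps_def)
  finally show ?thesis .
qed

lemma betti_A0: "0 \<le> t \<Longrightarrow> betti0 TYPE('k::field) X d t = cnt A0 t"
  unfolding betti0_def using dimH0_rips[OF ms _ injf] cnt_A0 by simp

lemma rank_A0: "s \<le> t \<Longrightarrow> rankH0 TYPE('k::field) (rips X d s) (rips X d t) = (if 0 \<le> s then cnt A0 t else 0)"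
proof (cases "0 \<le> s")
  case True
  assume st: "s \<le> t"
  have "rankH0 TYPE('k) (rips X d s) (rips X d t) = dimH0 TYPE('k) (rips X d t)"
    by (rule rank_pos[OF ms True st])
  also have "\<dots> = cnt A0 t" using betti_A0[of t, where 'k='k] True st by (simp add: betti0_def)
  finally show ?thesis using True by simp
next
  case False
  then show ?thesis using rank_neg[OF ms, of s "rips X d t", where 'k='k] by simp
qed

lemma A0_pos: "\<forall>a\<in>#A0. 0 < a"
  unfolding A0_def using tau_pos by auto

lemma dgm_eq: "dgm0 TYPE('k::field) X d = image_mset (Pair 0) A0"
  unfolding dgm0_def
proof (rule the_equality)
  show "(\<forall>p\<in>#image_mset (Pair 0) A0. fst p < snd p) \<and>
    (\<forall>s t::real. s \<le> t \<longrightarrow> rankH0 TYPE('k) (rips X d s) (rips X d t) =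
        size (filter_mset (\<lambda>p. fst p \<le> ereal s \<and> ereal t < snd p) (image_mset (Pair 0) A0)))"
  proof (intro conjI allI impI)
    show "\<forall>p\<in>#image_mset (Pair 0) A0. fst p < snd p" using A0_pos by auto
  next
    fix s t :: real assume st: "s \<le> t"
    show "rankH0 TYPE('k) (rips X d s) (rips X d t) =
        size (filter_mset (\<lambda>p. fst p \<le> ereal s \<and> ereal t < snd p) (image_mset (Pair 0) A0))"
      unfolding rank_A0[OF st, where 'k='k] size_filter_pair0 ..
  qed
next
  fix D :: "(ereal \<times> ereal) multiset"
  assume h: "(\<forall>p\<in>#D. fst p < snd p) \<and>
    (\<forall>s t::real. s \<le> t \<longrightarrow> rankH0 TYPE('k) (rips X d s) (rips X d t) =
        size (filter_mset (\<lambda>p. fst p \<le> ereal s \<and> ereal t < snd p) D))"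
  have lt: "\<And>p. p \<in># D \<Longrightarrow> fst p < snd p" using h by blast
  have rk: "(if 0 \<le> s then cnt A0 t else 0) =
        size (filter_mset (\<lambda>p. fst p \<le> ereal s \<and> ereal t < snd p) D)" if st: "s \<le> t" for s t
  proof -
    have "rankH0 TYPE('k) (rips X d s) (rips X d t) =
        size (filter_mset (\<lambda>p. fst p \<le> ereal s \<and> ereal t < snd p) D)" using h st by blast
    then show ?thesis unfolding rank_A0[OF st, where 'k='k] .
  qed
  have fst0: "fst p = 0" if p: "p \<in># D" for p
  proof (rule ccontr)
    assume ne: "fst p \<noteq> 0"
    show False
    proof (cases "fst p < 0")
      case True
      then have "fst p < min 0 (snd p)" using lt[OF p] by simp
      then obtain z where z: "fst p < ereal z" "ereal z < min 0 (snd p)" using ereal_dense2 by blast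
      then have z0: "\<not> 0 \<le> z" and zs: "ereal z < snd p" by auto
      have "p \<in># filter_mset (\<lambda>p. fst p \<le> ereal z \<and> ereal z < snd p) D"
        using p z zs by simp
      then have "filter_mset (\<lambda>p. fst p \<le> ereal z \<and> ereal z < snd p) D \<noteq> {#}" by (metis empty_iff set_mset_empty)
      then have "0 < size (filter_mset (\<lambda>p. fst p \<le> ereal z \<and> ereal z < snd p) D)"
        by (metis neq0_conv size_eq_0_iff_empty)
      note pos = this
      have r: "(if 0 \<le> z then cnt A0 z else 0) = size (filter_mset (\<lambda>p. fst p \<le> ereal z \<and> ereal z < snd p) D)"
        by (rule rk) simp
      have "size (filter_mset (\<lambda>p. fst p \<le> ereal z \<and> ereal z < snd p) D) = 0"
        using r z0 by metis
      then show False using pos by (metis less_irrefl)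
    next
      case False
      then have pos: "0 < fst p" using ne by simp
      obtain b where b: "fst p = ereal b" using pos lt[OF p] by (cases "fst p") auto
      have b0: "0 < b" using pos b by simp
      let ?F0 = "filter_mset (\<lambda>p. fst p \<le> ereal 0 \<and> ereal b < snd p) D"
      let ?Fb = "filter_mset (\<lambda>p. fst p \<le> ereal b \<and> ereal b < snd p) D"
      have sub: "?F0 \<subseteq># ?Fb"
        by (rule filter_mset_mono_strong) (use b0 in \<open>auto intro: order_trans\<close>)
      have "p \<in># ?Fb" using p b lt[OF p] by simp
      moreover have "\<not> p \<in># ?F0" using b b0 by simp
      ultimately have "?F0 \<noteq> ?Fb" by metis
      then have "?F0 \<subset># ?Fb" using sub by (simp add: subset_mset.less_le)
      then have "size ?F0 < size ?Fb" by (rule mset_subset_size)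
      then show False using rk[of 0 b] rk[of b b] b0 by simp
    qed
  qed
  define AD where "AD = image_mset snd D"
  have Deq: "D = image_mset (Pair 0) AD"
  proof -
    have "image_mset (Pair 0) AD = image_mset (\<lambda>p. (0, snd p)) D"
      unfolding AD_def by (simp add: multiset.map_comp comp_def)
    also have "\<dots> = image_mset id D"
      by (rule image_mset_cong) (use fst0 in \<open>auto simp: prod_eq_iff\<close>)
    finally show ?thesis by simp
  qed
  have ADpos: "\<forall>a\<in>#AD. 0 < a" unfolding AD_def using lt fst0 by fastforce
  have "AD = A0"
  proof (rule cnt_unique[OF ADpos A0_pos])
    fix t :: real assume t: "0 \<le> t"
    have "cnt A0 t = size (filter_mset (\<lambda>p. fst p \<le> ereal 0 \<and> ereal t < snd p) D)"
      using rk[of 0 t] t by simp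
    also have "\<dots> = cnt AD t" using size_filter_pair0[of 0 t AD] Deq by simp
    finally show "cnt AD t = cnt A0 t" by simp
  qed
  then show "D = image_mset (Pair 0) A0" using Deq by simp
qed

end

lemma dgm_char:
  assumes ms: "finite_metric_space X d"
  shows "\<exists>A. dgm0 TYPE('k::field) X d = image_mset (Pair 0) A \<and> (\<forall>a\<in>#A. 0 < a) \<and>
           (\<forall>t\<ge>0. betti0 TYPE('k) X d t = cnt A t)"
proof -
  obtain f :: "'a \<Rightarrow> nat" and n where "f ` X = {i. i < n}" "inj_on f X"
    using finite_imp_inj_to_nat_seg[OF finX[OF ms]] by blast
  then show ?thesis using dgm_eq[OF ms, where 'k='k] A0_pos[OF ms] betti_A0[OF ms, where 'k='k] by blast
qed

theorem theorem4p14: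
  fixes X :: "'a set" and dX :: "'a \<Rightarrow> 'a \<Rightarrow> real"
    and Y :: "'b set" and dY :: "'b \<Rightarrow> 'b \<Rightarrow> real"
  assumes "finite_metric_space X dX" and "finite_metric_space Y dY"
  shows "bottleneck_dist (dgm0 TYPE('k::field) X dX) (dgm0 TYPE('k) Y dY)
           \<le> interleaving_dist (betti0 TYPE('k) X dX) (betti0 TYPE('k) Y dY)"
proof -
  obtain A where A: "dgm0 TYPE('k) X dX = image_mset (Pair 0) A" "\<forall>a\<in>#A. 0 < a"
      "\<And>t. 0 \<le> t \<Longrightarrow> betti0 TYPE('k) X dX t = cnt A t"
    using dgm_char[OF assms(1), where 'k='k] by blast
  obtain B where B: "dgm0 TYPE('k) Y dY = image_mset (Pair 0) B" "\<forall>a\<in>#B. 0 < a"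
      "\<And>t. 0 \<le> t \<Longrightarrow> betti0 TYPE('k) Y dY t = cnt B t"
    using dgm_char[OF assms(2), where 'k='k] by blast
  show ?thesis
    unfolding interleaving_dist_def
  proof (rule Inf_greatest)
    fix e assume "e \<in> {ereal \<epsilon> |\<epsilon>. 0 \<le> \<epsilon> \<and>
        (\<forall>\<delta>\<ge>0. betti0 TYPE('k) Y dY (\<delta> + \<epsilon>) \<le> betti0 TYPE('k) X dX \<delta> \<and>
                 betti0 TYPE('k) X dX (\<delta> + \<epsilon>) \<le> betti0 TYPE('k) Y dY \<delta>)}"
    then obtain \<epsilon> where e: "e = ereal \<epsilon>" "0 \<le> \<epsilon>"
      and h: "\<And>\<delta>. 0 \<le> \<delta> \<Longrightarrow> betti0 TYPE('k) Y dY (\<delta> + \<epsilon>) \<le> betti0 TYPE('k) X dX \<delta> \<and>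
                 betti0 TYPE('k) X dX (\<delta> + \<epsilon>) \<le> betti0 TYPE('k) Y dY \<delta>" by blast
    have h1: "cnt B (t + \<epsilon>) \<le> cnt A t" if "0 \<le> t" for t
      using h[OF that] A(3)[OF that] B(3)[of "t + \<epsilon>"] that e(2) by simp
    have h2: "cnt A (t + \<epsilon>) \<le> cnt B t" if "0 \<le> t" for t
      using h[OF that] B(3)[OF that] A(3)[of "t + \<epsilon>"] that e(2) by simp
    obtain M where "eps_matching (image_mset (Pair 0) A) (image_mset (Pair 0) B) M \<epsilon>"
      using matching_exists[OF A(2) B(2) e(2) h1 h2] by blast
    then have "ereal \<epsilon> \<in> {ereal \<epsilon> | \<epsilon>. 0 \<le> \<epsilon> \<and> (\<exists>M. eps_matching (dgm0 TYPE('k) X dX) (dgm0 TYPE('k) Y dY) M \<epsilon>)}"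
      using A(1) B(1) e(2) by auto
    then show "bottleneck_dist (dgm0 TYPE('k) X dX) (dgm0 TYPE('k) Y dY) \<le> e"
      unfolding bottleneck_dist_def e(1) by (rule Inf_lower)
  qed
qed

end
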